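(* Let $\mathcal T=(G,\mathbf T^{(1)},\dots,\mathbf T^{(n)})$ be a tensor network with all $\mathbf T^{(i)}\neq0$ and contraction $\mathbf T\neq0$, and let $\epsilon>0$. Let $\delta=(\delta^{(i)})_{i=1}^n$ be a random sitewise perturbation such that all entries of all $\delta^{(i)}$ are independent with mean $0$, the entries of each $\delta^{(i)}$ have a common variance, and $\mathbb E\|\delta^{(i)}\|_F^2\le\epsilon^2\|\mathbf T^{(i)}\|_F^2$ for all $i$. Then, as $\epsilon\to0$, $$\mathbb E\,\mathscr E_r(\mathcal T,\delta)^2\le\epsilon^2\frac{\|M_{\overline{\mathcal T}}\|_F^2}{\|\overline{\mathbf T}\|_F^2}+O(\epsilon^3),$$ with equality (up to $O(\epsilon^3)$) when $\mathbb E\|\delta^{(i)}\|_F^2=\epsilon^2\|\mathbf T^{(i)}\|_F^2$ for all $i$. If instead all entries of all $\delta^{(i)}$ are independent, mean zero, with the same variance $\sigma^2$, then $\mathbb E\,\mathscr E_r(\mathcal T,\delta)^2=\sigma^2\frac{\|M_{\mathcal T}\|_F^2}{\|\mathbf T\|_F^2}+O(\sigma^3)$ as $\sigma\to0$.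
   Context: Tensor network setup: A tensor network $\mathcal T=(G,\mathbf T^{(1)},\dots,\mathbf T^{(n)})$ consists of a multigraph $G$ with vertices $v_1,\dots,v_n$, whose edges are either edges between distinct vertices (contracted legs) or self-loops (uncontracted legs), each edge having a dimension, and tensors $\mathbf T^{(j)}$ at $v_j$ with one mode per incident edge. Its contraction $\mathbf T=\mathscr T_G(\mathbf T^{(1)},\dots,\mathbf T^{(n)})$ is obtained by summing over all contracted-edge indices the product of the entries of all $\mathbf T^{(j)}$; it is multilinear in the $\mathbf T^{(j)}$. The environment matrix $M_{\mathbf T^{(j)}}$ of site $j$ is the matrix of the linear map $X\mapsto\mathrm{vec}(\mathscr T_G(\mathbf T^{(1)},\dots,X,\dots,\mathbf T^{(n)}))$ ($X$ in slot $j$) acting on $\mathrm{vec}(X)$. The environment matrix of the network is $M_{\mathcal T}=[M_{\mathbf T^{(1)}}\ \cdots\ M_{\mathbf T^{(n)}}]$, so $\|M_{\mathcal T}\|_F^2=\sum_i\|M_{\mathbf T^{(i)}}\|_F^2$. For a sitewise perturbation $\delta$ (tensors $\delta^{(i)}$ of the shapes of $\mathbf T^{(i)}$), $\hat{\mathbf T}=\mathscr T_G(\mathbf T^{(1)}+\delta^{(1)},\dots,\mathbf T^{(n)}+\delta^{(n)})$ and $\mathscr E_r(\mathcal T,\delta)=\|\hat{\mathbf T}-\mathbf T\|_F/\|\mathbf T\|_F$. Entrywise normalized network: $\overline{\mathcal T}=(G,\overline{\mathbf T}^{(1)},\dots,\overline{\mathbf T}^{(n)})$ with $\overline{\mathbf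 T}^{(j)}=\sqrt{N_j}\,\mathbf T^{(j)}/\|\mathbf T^{(j)}\|_F$, where $N_j$ is the number of entries of $\mathbf T^{(j)}$; $\overline{\mathbf T}$ is its contraction and $M_{\overline{\mathcal T}}$ its environment matrix. *)

theory Defs
  imports "HOL-Probability.Probability" "HOL-Library.Landau_Symbols"
begin

text \<open>
Tensor network graph: sites are 0..<n; edges form a finite set E of an arbitrary type;
ends e is the set of sites incident to edge e (one site: self-loop = uncontracted leg,
two sites: contracted leg between distinct sites); d e is the dimension of edge e.
An index assignment is a function from edges to nat, extensional (0 off the relevant edges).
A tensor at site j is a real function on site_idx j.
\<close>

definition tn_graph :: "nat \<Rightarrow> 'e set \<Rightarrow> ('e \<Rightarrow> nat set) \<Rightarrow> ('e \<Rightarrow> nat) \<Rightarrow> bool" where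
  "tn_graph n E ends d \<longleftrightarrow> finite E \<and>
     (\<forall>e\<in>E. ends e \<subseteq> {..<n} \<and> (card (ends e) = 1 \<or> card (ends e) = 2) \<and> d e \<ge> 1)"

definition open_edges :: "'e set \<Rightarrow> ('e \<Rightarrow> nat set) \<Rightarrow> 'e set" where
  "open_edges E ends = {e\<in>E. card (ends e) = 1}"

definition idx_on :: "'e set \<Rightarrow> ('e \<Rightarrow> nat) \<Rightarrow> ('e \<Rightarrow> nat) set" where
  "idx_on S d = {a. \<forall>e. (e \<in> S \<longrightarrow> a e < d e) \<and> (e \<notin> S \<longrightarrow> a e = 0)}"

definition site_edges :: "'e set \<Rightarrow> ('e \<Rightarrow> nat set) \<Rightarrow> nat \<Rightarrow> 'e set" where
  "site_edges E ends j = {e\<in>E. j \<in> ends e}"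

definition site_idx :: "'e set \<Rightarrow> ('e \<Rightarrow> nat set) \<Rightarrow> ('e \<Rightarrow> nat) \<Rightarrow> nat \<Rightarrow> ('e \<Rightarrow> nat) set" where
  "site_idx E ends d j = idx_on (site_edges E ends j) d"

definition out_idx :: "'e set \<Rightarrow> ('e \<Rightarrow> nat set) \<Rightarrow> ('e \<Rightarrow> nat) \<Rightarrow> ('e \<Rightarrow> nat) set" where
  "out_idx E ends d = idx_on (open_edges E ends) d"

definition restr :: "'e set \<Rightarrow> ('e \<Rightarrow> nat) \<Rightarrow> ('e \<Rightarrow> nat)" where
  "restr S a = (\<lambda>e. if e \<in> S then a e else 0)"

definition contract :: "nat \<Rightarrow> 'e set \<Rightarrow> ('e \<Rightarrow> nat set) \<Rightarrow> ('e \<Rightarrow> nat)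
    \<Rightarrow> (nat \<Rightarrow> ('e \<Rightarrow> nat) \<Rightarrow> real) \<Rightarrow> ('e \<Rightarrow> nat) \<Rightarrow> real" where
  "contract n E ends d T b =
     (\<Sum>a\<in>{a\<in>idx_on E d. restr (open_edges E ends) a = b}.
        \<Prod>j<n. T j (restr (site_edges E ends j) a))"

definition frob :: "('e \<Rightarrow> nat) set \<Rightarrow> (('e \<Rightarrow> nat) \<Rightarrow> real) \<Rightarrow> real" where
  "frob S f = sqrt (\<Sum>a\<in>S. (f a)\<^sup>2)"

definition site_norm :: "'e set \<Rightarrow> ('e \<Rightarrow> nat set) \<Rightarrow> ('e \<Rightarrow> nat)
    \<Rightarrow> (nat \<Rightarrow> ('e \<Rightarrow> nat) \<Rightarrow> real) \<Rightarrow> nat \<Rightarrow> real" where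
  "site_norm E ends d T j = frob (site_idx E ends d j) (T j)"

definition contract_norm :: "nat \<Rightarrow> 'e set \<Rightarrow> ('e \<Rightarrow> nat set) \<Rightarrow> ('e \<Rightarrow> nat)
    \<Rightarrow> (nat \<Rightarrow> ('e \<Rightarrow> nat) \<Rightarrow> real) \<Rightarrow> real" where
  "contract_norm n E ends d T = frob (out_idx E ends d) (contract n E ends d T)"

text \<open>Squared Frobenius norm of the environment matrix of site j: the column indexed by
  entry x is the vectorised contraction with the unit tensor e_x in slot j.\<close>
definition env_site_frob2 :: "nat \<Rightarrow> 'e set \<Rightarrow> ('e \<Rightarrow> nat set) \<Rightarrow> ('e \<Rightarrow> nat)
    \<Rightarrow> (nat \<Rightarrow> ('e \<Rightarrow> nat) \<Rightarrow> real) \<Rightarrow> nat \<Rightarrow> real" where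
  "env_site_frob2 n E ends d T j =
     (\<Sum>x\<in>site_idx E ends d j. \<Sum>b\<in>out_idx E ends d.
        (contract n E ends d (T(j := (\<lambda>a. if a = x then 1 else 0))) b)\<^sup>2)"

definition env_frob2 :: "nat \<Rightarrow> 'e set \<Rightarrow> ('e \<Rightarrow> nat set) \<Rightarrow> ('e \<Rightarrow> nat)
    \<Rightarrow> (nat \<Rightarrow> ('e \<Rightarrow> nat) \<Rightarrow> real) \<Rightarrow> real" where
  "env_frob2 n E ends d T = (\<Sum>j<n. env_site_frob2 n E ends d T j)"

definition normalize_tn :: "'e set \<Rightarrow> ('e \<Rightarrow> nat set) \<Rightarrow> ('e \<Rightarrow> nat)
    \<Rightarrow> (nat \<Rightarrow> ('e \<Rightarrow> nat) \<Rightarrow> real) \<Rightarrow> nat \<Rightarrow> ('e \<Rightarrow> nat) \<Rightarrow> real" where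
  "normalize_tn E ends d T = (\<lambda>j a. sqrt (real (card (site_idx E ends d j))) * T j a
                                    / site_norm E ends d T j)"

definition rel_err :: "nat \<Rightarrow> 'e set \<Rightarrow> ('e \<Rightarrow> nat set) \<Rightarrow> ('e \<Rightarrow> nat)
    \<Rightarrow> (nat \<Rightarrow> ('e \<Rightarrow> nat) \<Rightarrow> real) \<Rightarrow> (nat \<Rightarrow> ('e \<Rightarrow> nat) \<Rightarrow> real) \<Rightarrow> real" where
  "rel_err n E ends d T \<delta> =
     frob (out_idx E ends d)
       (\<lambda>b. contract n E ends d (\<lambda>j a. T j a + \<delta> j a) b - contract n E ends d T b)
     / contract_norm n E ends d T"

definition sitewise_noise :: "nat \<Rightarrow> 'e set \<Rightarrow> ('e \<Rightarrow> nat set) \<Rightarrow> ('e \<Rightarrow> nat)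
    \<Rightarrow> 'w measure \<Rightarrow> (nat \<Rightarrow> ('e \<Rightarrow> nat) \<Rightarrow> 'w \<Rightarrow> real) \<Rightarrow> bool" where
  "sitewise_noise n E ends d M \<delta> \<longleftrightarrow>
     prob_space M \<and>
     (\<forall>j<n. \<forall>a\<in>site_idx E ends d j.
        \<delta> j a \<in> borel_measurable M \<and> integrable M (\<lambda>\<omega>. (\<delta> j a \<omega>)\<^sup>2)
        \<and> integral\<^sup>L M (\<delta> j a) = 0) \<and>
     prob_space.indep_vars M (\<lambda>_. borel) (\<lambda>(j, a). \<delta> j a)
        {(j, a). j < n \<and> a \<in> site_idx E ends d j} \<and>
     (\<forall>j<n. \<exists>v. \<forall>a\<in>site_idx E ends d j.
        integral\<^sup>L M (\<lambda>\<omega>. (\<delta> j a \<omega> - integral\<^sup>L M (\<delta> j a))\<^sup>2) = v)"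

definition exp_site_sq :: "'e set \<Rightarrow> ('e \<Rightarrow> nat set) \<Rightarrow> ('e \<Rightarrow> nat)
    \<Rightarrow> 'w measure \<Rightarrow> (nat \<Rightarrow> ('e \<Rightarrow> nat) \<Rightarrow> 'w \<Rightarrow> real) \<Rightarrow> nat \<Rightarrow> real" where
  "exp_site_sq E ends d M \<delta> j =
     integral\<^sup>L M (\<lambda>\<omega>. (frob (site_idx E ends d j) (\<lambda>a. \<delta> j a \<omega>))\<^sup>2)"

definition exp_rel_err2 :: "nat \<Rightarrow> 'e set \<Rightarrow> ('e \<Rightarrow> nat set) \<Rightarrow> ('e \<Rightarrow> nat)
    \<Rightarrow> (nat \<Rightarrow> ('e \<Rightarrow> nat) \<Rightarrow> real) \<Rightarrow> 'w measure \<Rightarrow> (nat \<Rightarrow> ('e \<Rightarrow> nat) \<Rightarrow> 'w \<Rightarrow> real) \<Rightarrow> real" where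
  "exp_rel_err2 n E ends d T M \<delta> =
     integral\<^sup>L M (\<lambda>\<omega>. (rel_err n E ends d T (\<lambda>j a. \<delta> j a \<omega>))\<^sup>2)"

end

theory Submission
  imports Defs
begin


lemma abs_prod_le_sq: "\<bar>a * b\<bar> \<le> a\<^sup>2 + (b::real)\<^sup>2"
proof -
  have h1: "2 * (\<bar>a\<bar> * \<bar>b\<bar>) \<le> a\<^sup>2 + b\<^sup>2"
    using sum_squares_bound[of "\<bar>a\<bar>" "\<bar>b\<bar>"] by (simp add: mult.assoc)
  have h2: "0 \<le> \<bar>a\<bar> * \<bar>b\<bar>" by simp
  from h1 h2 have "\<bar>a\<bar> * \<bar>b\<bar> \<le> a\<^sup>2 + b\<^sup>2" by linarith
  then show ?thesis by (simp add: abs_mult)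
qed

lemma (in prob_space) pair_expect:
  fixes X :: "nat \<Rightarrow> ('e\<Rightarrow>nat) \<Rightarrow> 'a \<Rightarrow> real"
  assumes ind: "indep_vars (\<lambda>_. borel) (\<lambda>(j,a). X j a) I" and I: "(j,x)\<in>I" "(j,y)\<in>I"
  and L2: "integrable M (\<lambda>\<omega>. (X j x \<omega>)\<^sup>2)" "integrable M (\<lambda>\<omega>. (X j y \<omega>)\<^sup>2)"
  and m: "expectation (X j x) = 0" "expectation (X j y) = 0"
  shows "integrable M (\<lambda>\<omega>. (t0 + \<alpha> * X j x \<omega>) * (s0 + \<beta> * X j y \<omega>))
    \<and> expectation (\<lambda>\<omega>. (t0 + \<alpha> * X j x \<omega>) * (s0 + \<beta> * X j y \<omega>)) =
       t0 * s0 + (if x = y then \<alpha>*\<beta>*expectation (\<lambda>\<omega>. (X j x \<omega>)\<^sup>2) else 0)"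
proof -
  have rv: "random_variable borel (X j x)" "random_variable borel (X j y)"
    using ind I unfolding indep_vars_def by force+
  note [measurable] = rv
  have ix: "integrable M (X j x)" "integrable M (X j y)"
    using square_integrable_imp_integrable rv L2 by blast+
  have ixy: "integrable M (\<lambda>\<omega>. X j x \<omega> * X j y \<omega>)"
  proof (rule Bochner_Integration.integrable_bound[OF Bochner_Integration.integrable_add[OF L2]])
    show "(\<lambda>\<omega>. X j x \<omega> * X j y \<omega>) \<in> borel_measurable M" by measurable
    show "AE \<omega> in M. norm (X j x \<omega> * X j y \<omega>) \<le> norm ((X j x \<omega>)\<^sup>2 + (X j y \<omega>)\<^sup>2)"
    proof (rule AE_I2)
      fix \<omega>
      have "\<bar>X j x \<omega> * X j y \<omega>\<bar> \<le> (X j x \<omega>)\<^sup>2 + (X j y \<omega>)\<^sup>2"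
        using abs_prod_le_sq[of "X j x \<omega>" "X j y \<omega>"] .
      then show "norm (X j x \<omega> * X j y \<omega>) \<le> norm ((X j x \<omega>)\<^sup>2 + (X j y \<omega>)\<^sup>2)" by simp
    qed
  qed
  have exy: "expectation (\<lambda>\<omega>. X j x \<omega> * X j y \<omega>) = (if x = y then expectation (\<lambda>\<omega>. (X j x \<omega>)\<^sup>2) else 0)"
  proof (cases "x = y")
    case True then show ?thesis by (simp add: power2_eq_square)
  next
    case False
    have ind2: "indep_vars (\<lambda>_. borel) (\<lambda>(j,a). X j a) {(j,x),(j,y)}"
      using indep_vars_subset[OF ind] I by auto
    have "expectation (\<lambda>\<omega>. \<Prod>i\<in>{(j,x),(j,y)}. (\<lambda>(j,a). X j a) i \<omega>) =
          (\<Prod>i\<in>{(j,x),(j,y)}. expectation ((\<lambda>(j,a). X j a) i))"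
      by (rule indep_vars_lebesgue_integral[OF _ ind2]) (use ix in auto)
    then show ?thesis using False m by simp
  qed
  have eq: "(\<lambda>\<omega>. (t0 + \<alpha> * X j x \<omega>) * (s0 + \<beta> * X j y \<omega>)) =
     (\<lambda>\<omega>. t0 * s0 + t0 * \<beta> * X j y \<omega> + s0 * \<alpha> * X j x \<omega> + \<alpha>*\<beta>*(X j x \<omega> * X j y \<omega>))"
    by (auto simp: algebra_simps)
  show ?thesis unfolding eq using ix ixy exy m by (simp add: algebra_simps prob_space)
qed

lemma (in prob_space) site_prod_expect:
  fixes X :: "nat \<Rightarrow> ('e\<Rightarrow>nat) \<Rightarrow> 'a \<Rightarrow> real" and S :: "nat \<Rightarrow> ('e\<Rightarrow>nat) set"
  assumes ind: "indep_vars (\<lambda>_. borel) (\<lambda>(j,a). X j a) {(j,a). j<n \<and> a \<in> S j}"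
  and L2: "\<And>j a. j<n \<Longrightarrow> a\<in>S j \<Longrightarrow> integrable M (\<lambda>\<omega>. (X j a \<omega>)\<^sup>2)"
  and mean: "\<And>j a. j<n \<Longrightarrow> a\<in>S j \<Longrightarrow> expectation (X j a) = 0"
  and xy: "\<And>j. j<n \<Longrightarrow> x j \<in> S j" "\<And>j. j<n \<Longrightarrow> y j \<in> S j"
  shows "integrable M (\<lambda>\<omega>. \<Prod>j<n. (t j + \<alpha> * X j (x j) \<omega>) * (s j + \<beta> * X j (y j) \<omega>)) \<and>
   expectation (\<lambda>\<omega>. \<Prod>j<n. (t j + \<alpha> * X j (x j) \<omega>) * (s j + \<beta> * X j (y j) \<omega>)) =
   (\<Prod>j<n. t j * s j + (if x j = y j then \<alpha> * \<beta> * expectation (\<lambda>\<omega>. (X j (x j) \<omega>)\<^sup>2) else 0))"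
proof -
  define I where "I = {(j,a). j<n \<and> a \<in> S j}"
  define K where "K j = {(j, x j), (j, y j)}" for j
  define Y where "Y j = (\<lambda>g. (t j + \<alpha> * g (j, x j)) * (s j + \<beta> * g (j, y j)))" for j
  define Z where "Z j = (\<lambda>\<omega>. (t j + \<alpha> * X j (x j) \<omega>) * (s j + \<beta> * X j (y j) \<omega>))" for j
  have ind1: "indep_vars (\<lambda>j. PiM (K j) (\<lambda>_. borel)) (\<lambda>j \<omega>. restrict (\<lambda>i. (\<lambda>(j,a). X j a) i \<omega>) (K j)) {..<n}"
    by (rule indep_vars_restrict[OF ind]) (auto simp: K_def xy disjoint_family_on_def)
  have meas: "Y j \<in> borel_measurable (PiM (K j) (\<lambda>_. borel))" for j
  proof -
    have a: "(j, x j) \<in> K j" "(j, y j) \<in> K j" by (auto simp: K_def)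
    show ?thesis unfolding Y_def using a by measurable
  qed
  have ind2: "indep_vars (\<lambda>_. borel) (\<lambda>j \<omega>. Y j (restrict (\<lambda>i. (\<lambda>(j,a). X j a) i \<omega>) (K j))) {..<n}"
    by (rule indep_vars_compose2[OF ind1 meas])
  have ind3: "indep_vars (\<lambda>_. borel) Z {..<n}"
    using ind2 by (rule indep_vars_cong[THEN iffD1, rotated 3]) (auto simp: Y_def Z_def K_def)
  have pe: "integrable M (Z j) \<and> expectation (Z j) = t j * s j + (if x j = y j then \<alpha> * \<beta> * expectation (\<lambda>\<omega>. (X j (x j) \<omega>)\<^sup>2) else 0)"
    if "j < n" for j
    unfolding Z_def
    by (rule pair_expect[OF ind]) (use that xy L2 mean in auto)
  have "integrable M (\<lambda>\<omega>. \<Prod>j<n. Z j \<omega>)"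
    by (rule indep_vars_integrable[OF _ ind3]) (use pe in auto)
  moreover have "expectation (\<lambda>\<omega>. \<Prod>j<n. Z j \<omega>) = (\<Prod>j<n. expectation (Z j))"
    by (rule indep_vars_lebesgue_integral[OF _ ind3]) (use pe in auto)
  ultimately show ?thesis using pe by (simp add: Z_def)
qed



definition fib :: "'e set \<Rightarrow> ('e \<Rightarrow> nat set) \<Rightarrow> ('e \<Rightarrow> nat) \<Rightarrow> ('e \<Rightarrow> nat) \<Rightarrow> ('e \<Rightarrow> nat) set" where
  "fib E ends d b = {a\<in>idx_on E d. restr (open_edges E ends) a = b}"

definition loc :: "'e set \<Rightarrow> ('e \<Rightarrow> nat set) \<Rightarrow> nat \<Rightarrow> ('e \<Rightarrow> nat) \<Rightarrow> ('e \<Rightarrow> nat)" where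
  "loc E ends j a = restr (site_edges E ends j) a"

lemma contract_alt: "contract n E ends d T b = (\<Sum>a\<in>fib E ends d b. \<Prod>j<n. T j (loc E ends j a))"
  unfolding contract_def fib_def loc_def ..

lemma finite_idx_on: "finite S \<Longrightarrow> finite (idx_on S d)"
proof -
  assume S: "finite S"
  have "idx_on S d \<subseteq> (\<lambda>f e. if e \<in> S then f e else 0) ` (PiE S (\<lambda>e. {..<d e}))"
  proof
    fix a assume a: "a \<in> idx_on S d"
    show "a \<in> (\<lambda>f e. if e \<in> S then f e else 0) ` (PiE S (\<lambda>e. {..<d e}))"
      by (rule image_eqI[of _ _ "restrict a S"]) (use a in \<open>auto simp: idx_on_def fun_eq_iff\<close>)
  qed
  moreover have "finite (PiE S (\<lambda>e. {..<d e}))" using S by (intro finite_PiE) auto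
  ultimately show ?thesis by (rule finite_subset[OF _ finite_imageI])
qed

lemma finite_fib: "tn_graph n E ends d \<Longrightarrow> finite (fib E ends d b)"
  unfolding fib_def tn_graph_def by (auto intro: finite_subset[OF _ finite_idx_on])

lemma finite_out: "tn_graph n E ends d \<Longrightarrow> finite (out_idx E ends d)"
  unfolding out_idx_def tn_graph_def open_edges_def by (auto intro: finite_idx_on)

lemma finite_site_idx: "tn_graph n E ends d \<Longrightarrow> finite (site_idx E ends d j)"
  unfolding site_idx_def tn_graph_def site_edges_def by (auto intro: finite_idx_on)

lemma loc_in: "a \<in> fib E ends d b \<Longrightarrow> loc E ends j a \<in> site_idx E ends d j"
  unfolding fib_def loc_def site_idx_def idx_on_def restr_def site_edges_def by auto

lemma zero_in_site: "tn_graph n E ends d \<Longrightarrow> (\<lambda>_. 0) \<in> site_idx E ends d j"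
  unfolding tn_graph_def site_idx_def idx_on_def site_edges_def by force

definition Fv :: "nat \<Rightarrow> 'e set \<Rightarrow> ('e \<Rightarrow> nat set) \<Rightarrow> ('e \<Rightarrow> nat)
    \<Rightarrow> (nat \<Rightarrow> ('e \<Rightarrow> nat) \<Rightarrow> real) \<Rightarrow> (nat \<Rightarrow> real) \<Rightarrow> real" where
  "Fv n E ends d T v = (\<Sum>b\<in>out_idx E ends d. \<Sum>a\<in>fib E ends d b. \<Sum>a'\<in>fib E ends d b.
     (\<Prod>j<n. T j (loc E ends j a) * T j (loc E ends j a') + (if loc E ends j a = loc E ends j a' then v j else 0))
     - (\<Prod>j<n. T j (loc E ends j a) * T j (loc E ends j a')))"

lemma exp_formula:
  fixes M :: "'w measure" and \<delta> :: "nat \<Rightarrow> ('e \<Rightarrow> nat) \<Rightarrow> 'w \<Rightarrow> real"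
  assumes tn: "tn_graph n E ends d" and sn: "sitewise_noise n E ends d M \<delta>"
  defines "v \<equiv> \<lambda>j. integral\<^sup>L M (\<lambda>\<omega>. (\<delta> j (\<lambda>_. 0) \<omega>)\<^sup>2)"
  shows "exp_rel_err2 n E ends d T M \<delta> = Fv n E ends d T v / (contract_norm n E ends d T)\<^sup>2"
    and "\<forall>j<n. exp_site_sq E ends d M \<delta> j = real (card (site_idx E ends d j)) * v j"
proof -
  interpret prob_space M using sn unfolding sitewise_noise_def by blast
  let ?S = "site_idx E ends d"
  let ?l = "loc E ends"
  let ?fib = "fib E ends d"
  let ?out = "out_idx E ends d"
  let ?cn = "contract_norm n E ends d T"
  have ind: "indep_vars (\<lambda>_. borel) (\<lambda>(j,a). \<delta> j a) {(j,a). j<n \<and> a \<in> ?S j}"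
    using sn unfolding sitewise_noise_def by blast
  have L2: "\<And>j a. j<n \<Longrightarrow> a\<in>?S j \<Longrightarrow> integrable M (\<lambda>\<omega>. (\<delta> j a \<omega>)\<^sup>2)"
    and mean: "\<And>j a. j<n \<Longrightarrow> a\<in>?S j \<Longrightarrow> expectation (\<delta> j a) = 0"
    and rv: "\<And>j a. j<n \<Longrightarrow> a\<in>?S j \<Longrightarrow> \<delta> j a \<in> borel_measurable M"
    using sn unfolding sitewise_noise_def by blast+
  have var: "expectation (\<lambda>\<omega>. (\<delta> j a \<omega>)\<^sup>2) = v j" if "j < n" "a \<in> ?S j" for j a
  proof -
    obtain w where w: "\<forall>a\<in>?S j. expectation (\<lambda>\<omega>. (\<delta> j a \<omega> - expectation (\<delta> j a))\<^sup>2) = w"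
      using sn \<open>j<n\<close> unfolding sitewise_noise_def by blast
    have z: "(\<lambda>_. 0) \<in> ?S j" by (rule zero_in_site[OF tn])
    show ?thesis using w[rule_format, OF that(2)] w[rule_format, OF z] mean[OF that] mean[OF that(1) z]
      by (simp add: v_def)
  qed
  show "\<forall>j<n. exp_site_sq E ends d M \<delta> j = real (card (?S j)) * v j"
  proof (intro allI impI)
    fix j assume j: "j < n"
    have "exp_site_sq E ends d M \<delta> j = expectation (\<lambda>\<omega>. \<Sum>a\<in>?S j. (\<delta> j a \<omega>)\<^sup>2)"
      unfolding exp_site_sq_def frob_def by (simp add: sum_nonneg)
    also have "\<dots> = (\<Sum>a\<in>?S j. expectation (\<lambda>\<omega>. (\<delta> j a \<omega>)\<^sup>2))"
      by (rule Bochner_Integration.integral_sum) (use L2 j in auto)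
    also have "\<dots> = (\<Sum>a\<in>?S j. v j)" by (rule sum.cong) (use var j in auto)
    finally show "exp_site_sq E ends d M \<delta> j = real (card (?S j)) * v j" by simp
  qed
  define Q where "Q \<alpha> \<beta> a a' \<omega> = (\<Prod>j<n. (T j (?l j a) + \<alpha> * \<delta> j (?l j a) \<omega>) * (T j (?l j a') + \<beta> * \<delta> j (?l j a') \<omega>))"
    for \<alpha> \<beta> :: real and a a' \<omega>
  have QE: "integrable M (Q \<alpha> \<beta> a a') \<and> expectation (Q \<alpha> \<beta> a a') =
     (\<Prod>j<n. T j (?l j a) * T j (?l j a') + (if ?l j a = ?l j a' then \<alpha> * \<beta> * v j else 0))"
    if "a \<in> ?fib b" "a' \<in> ?fib b" for \<alpha> \<beta> a a' b
  proof -
    have "integrable M (Q \<alpha> \<beta> a a') \<and> expectation (Q \<alpha> \<beta> a a') =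
     (\<Prod>j<n. T j (?l j a) * T j (?l j a') + (if ?l j a = ?l j a' then \<alpha> * \<beta> * expectation (\<lambda>\<omega>. (\<delta> j (?l j a) \<omega>)\<^sup>2) else 0))"
      unfolding Q_def
      by (rule site_prod_expect[OF ind]) (use L2 mean loc_in that in auto)
    moreover have "(\<Prod>j<n. T j (?l j a) * T j (?l j a') + (if ?l j a = ?l j a' then \<alpha> * \<beta> * expectation (\<lambda>\<omega>. (\<delta> j (?l j a) \<omega>)\<^sup>2) else 0))
       = (\<Prod>j<n. T j (?l j a) * T j (?l j a') + (if ?l j a = ?l j a' then \<alpha> * \<beta> * v j else 0))"
    proof (rule prod.cong[OF refl])
      fix j assume "j \<in> {..<n}"
      then have h: "expectation (\<lambda>\<omega>. (\<delta> j (?l j a) \<omega>)\<^sup>2) = v j"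
        using var loc_in that by blast
      then show "T j (?l j a) * T j (?l j a') + (if ?l j a = ?l j a' then \<alpha> * \<beta> * expectation (\<lambda>\<omega>. (\<delta> j (?l j a) \<omega>)\<^sup>2) else 0)
         = T j (?l j a) * T j (?l j a') + (if ?l j a = ?l j a' then \<alpha> * \<beta> * v j else 0)" by (simp only: h)
    qed
    ultimately show ?thesis by simp
  qed
  have pw: "(rel_err n E ends d T (\<lambda>j a. \<delta> j a \<omega>))\<^sup>2 =
     (\<Sum>b\<in>?out. \<Sum>a\<in>?fib b. \<Sum>a'\<in>?fib b. Q 1 1 a a' \<omega> - Q 0 1 a a' \<omega> - Q 1 0 a a' \<omega> + Q 0 0 a a' \<omega>) / ?cn\<^sup>2"
    for \<omega>
  proof -
    define P where "P a = (\<Prod>j<n. T j (?l j a) + \<delta> j (?l j a) \<omega>) - (\<Prod>j<n. T j (?l j a))" for a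
    have D: "contract n E ends d (\<lambda>j a. T j a + \<delta> j a \<omega>) b - contract n E ends d T b = (\<Sum>a\<in>?fib b. P a)" for b
      unfolding contract_alt P_def by (simp add: sum_subtractf)
    have PP: "P a * P a' = Q 1 1 a a' \<omega> - Q 0 1 a a' \<omega> - Q 1 0 a a' \<omega> + Q 0 0 a a' \<omega>" for a a'
    proof -
      have q11: "Q 1 1 a a' \<omega> = (\<Prod>j<n. T j (?l j a) + \<delta> j (?l j a) \<omega>) * (\<Prod>j<n. T j (?l j a') + \<delta> j (?l j a') \<omega>)"
        unfolding Q_def by (simp add: prod.distrib)
      have q01: "Q 0 1 a a' \<omega> = (\<Prod>j<n. T j (?l j a)) * (\<Prod>j<n. T j (?l j a') + \<delta> j (?l j a') \<omega>)"
        unfolding Q_def by (simp add: prod.distrib)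
      have q10: "Q 1 0 a a' \<omega> = (\<Prod>j<n. T j (?l j a) + \<delta> j (?l j a) \<omega>) * (\<Prod>j<n. T j (?l j a'))"
        unfolding Q_def by (simp add: prod.distrib)
      have q00: "Q 0 0 a a' \<omega> = (\<Prod>j<n. T j (?l j a)) * (\<Prod>j<n. T j (?l j a'))"
        unfolding Q_def by (simp add: prod.distrib)
      show ?thesis unfolding P_def q11 q01 q10 q00 by (simp add: algebra_simps)
    qed
    have "(rel_err n E ends d T (\<lambda>j a. \<delta> j a \<omega>))\<^sup>2 = (\<Sum>b\<in>?out. (\<Sum>a\<in>?fib b. P a)\<^sup>2) / ?cn\<^sup>2"
      unfolding rel_err_def frob_def D by (simp add: power_divide sum_nonneg)
    also have "\<dots> = (\<Sum>b\<in>?out. \<Sum>a\<in>?fib b. \<Sum>a'\<in>?fib b. P a * P a') / ?cn\<^sup>2"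
      by (simp add: power2_eq_square sum_product)
    finally show ?thesis by (simp add: PP)
  qed
  have intQ: "integrable M (\<lambda>\<omega>. Q \<alpha> \<beta> a a' \<omega>)" if "a \<in> ?fib b" "a' \<in> ?fib b" for \<alpha> \<beta> a a' b
    using QE[OF that] by simp
  have "exp_rel_err2 n E ends d T M \<delta> =
    expectation (\<lambda>\<omega>. \<Sum>b\<in>?out. \<Sum>a\<in>?fib b. \<Sum>a'\<in>?fib b. Q 1 1 a a' \<omega> - Q 0 1 a a' \<omega> - Q 1 0 a a' \<omega> + Q 0 0 a a' \<omega>) / ?cn\<^sup>2"
    unfolding exp_rel_err2_def pw by simp
  also have "expectation (\<lambda>\<omega>. \<Sum>b\<in>?out. \<Sum>a\<in>?fib b. \<Sum>a'\<in>?fib b. Q 1 1 a a' \<omega> - Q 0 1 a a' \<omega> - Q 1 0 a a' \<omega> + Q 0 0 a a' \<omega>)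
    = (\<Sum>b\<in>?out. \<Sum>a\<in>?fib b. \<Sum>a'\<in>?fib b. expectation (Q 1 1 a a') - expectation (Q 0 1 a a') - expectation (Q 1 0 a a') + expectation (Q 0 0 a a'))"
    using intQ
    by (simp add: Bochner_Integration.integral_sum Bochner_Integration.integrable_sum
          Bochner_Integration.integral_add Bochner_Integration.integral_diff)
  also have "\<dots> = Fv n E ends d T v"
    unfolding Fv_def
    by (intro sum.cong refl) (simp add: QE cong: if_cong)
  finally show "exp_rel_err2 n E ends d T M \<delta> = Fv n E ends d T v / ?cn\<^sup>2" .
qed



lemma prod_expand_bound:
  fixes c w :: "nat \<Rightarrow> real"
  assumes "finite J" "\<forall>j\<in>J. \<bar>w j\<bar> \<le> m" "0 \<le> m" "m \<le> 1"
  shows "\<bar>(\<Prod>j\<in>J. c j + w j) - (\<Prod>j\<in>J. c j)\<bar> \<le> m * 2 ^ card J * (\<Prod>j\<in>J. \<bar>c j\<bar> + 1) \<and>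
    \<bar>(\<Prod>j\<in>J. c j + w j) - (\<Prod>j\<in>J. c j) - (\<Sum>j\<in>J. w j * (\<Prod>i\<in>J-{j}. c i))\<bar>
      \<le> m\<^sup>2 * 2 ^ card J * (\<Prod>j\<in>J. \<bar>c j\<bar> + 1)"
  using assms
proof (induction J rule: finite_induct)
  case empty
  then show ?case by simp
next
  case (insert k J)
  define P where "P = (\<Prod>j\<in>J. c j + w j)"
  define P0 where "P0 = (\<Prod>j\<in>J. c j)"
  define L where "L = (\<Sum>j\<in>J. w j * (\<Prod>i\<in>J-{j}. c i))"
  define G where "G = (\<Prod>j\<in>J. \<bar>c j\<bar> + 1)"
  define N where "N = (2::real) ^ card J"
  have IH: "\<bar>P - P0\<bar> \<le> m * N * G" "\<bar>P - P0 - L\<bar> \<le> m\<^sup>2 * N * G"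
    using insert by (auto simp: P_def P0_def L_def G_def N_def)
  have wk: "\<bar>w k\<bar> \<le> m" using insert by auto
  have G1: "1 \<le> G" unfolding G_def by (rule prod_ge_1) auto
  have P0G: "\<bar>P0\<bar> \<le> G" unfolding P0_def G_def abs_prod
    by (rule prod_mono) auto
  have N0: "0 \<le> N" "0 \<le> G" using G1 by (auto simp: N_def)
  have Lk: "(\<Sum>j\<in>insert k J. w j * (\<Prod>i\<in>insert k J-{j}. c i)) = w k * P0 + c k * L"
  proof -
    have "(\<Sum>j\<in>J. w j * (\<Prod>i\<in>insert k J-{j}. c i)) = (\<Sum>j\<in>J. c k * (w j * (\<Prod>i\<in>J-{j}. c i)))"
    proof (rule sum.cong[OF refl])
      fix j assume "j \<in> J"
      then have "insert k J - {j} = insert k (J - {j})" using insert by auto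
      then show "w j * (\<Prod>i\<in>insert k J-{j}. c i) = c k * (w j * (\<Prod>i\<in>J-{j}. c i))"
        using insert by simp
    qed
    moreover have "insert k J - {k} = J" using insert by auto
    ultimately show ?thesis using insert by (simp add: L_def P0_def sum_distrib_left)
  qed
  have e1: "(\<Prod>j\<in>insert k J. c j + w j) - (\<Prod>j\<in>insert k J. c j) = (c k + w k) * (P - P0) + w k * P0"
    using insert by (simp add: P_def P0_def algebra_simps)
  have e2: "(\<Prod>j\<in>insert k J. c j + w j) - (\<Prod>j\<in>insert k J. c j) - (\<Sum>j\<in>insert k J. w j * (\<Prod>i\<in>insert k J-{j}. c i))
     = c k * (P - P0 - L) + w k * (P - P0)"
    unfolding Lk using insert by (simp add: P_def P0_def algebra_simps)
  have cardk: "card (insert k J) = Suc (card J)" "(\<Prod>j\<in>insert k J. \<bar>c j\<bar> + 1) = (\<bar>c k\<bar> + 1) * G"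
    using insert by (auto simp: G_def)
  have b1: "\<bar>(c k + w k) * (P - P0) + w k * P0\<bar> \<le> m * (2 * N) * ((\<bar>c k\<bar> + 1) * G)"
  proof -
    have "\<bar>(c k + w k) * (P - P0)\<bar> \<le> (\<bar>c k\<bar> + 1) * (m * N * G)"
      unfolding abs_mult by (rule mult_mono) (use wk IH insert in auto)
    moreover have "\<bar>w k * P0\<bar> \<le> m * G" unfolding abs_mult by (rule mult_mono) (use wk P0G insert in auto)
    moreover have "m * G \<le> (\<bar>c k\<bar> + 1) * (m * N * G)"
    proof -
      have "1 \<le> N" by (simp add: N_def)
      then have "1 * G \<le> N * G" using N0 by (intro mult_right_mono) auto
      then have "m * G \<le> m * (N * G)" using insert by (intro mult_left_mono) auto
      then have "m * G \<le> m * N * G" by (simp add: mult.assoc)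
      also have "\<dots> = 1 * (m * N * G)" by simp
      also have "\<dots> \<le> (\<bar>c k\<bar> + 1) * (m * N * G)" using insert N0 by (intro mult_right_mono) auto
      finally show ?thesis .
    qed
    ultimately show ?thesis by (simp add: algebra_simps)
  qed
  have b2: "\<bar>c k * (P - P0 - L) + w k * (P - P0)\<bar> \<le> m\<^sup>2 * (2 * N) * ((\<bar>c k\<bar> + 1) * G)"
  proof -
    have "\<bar>c k * (P - P0 - L)\<bar> \<le> \<bar>c k\<bar> * (m\<^sup>2 * N * G)"
      unfolding abs_mult by (rule mult_left_mono) (use IH in auto)
    moreover have "\<bar>w k * (P - P0)\<bar> \<le> m * (m * N * G)"
      unfolding abs_mult by (rule mult_mono) (use wk IH insert in auto)
    moreover have "0 \<le> m\<^sup>2 * N * G" using N0 by simp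
    ultimately show ?thesis by (simp add: algebra_simps power2_eq_square)
  qed
  show ?case
    apply (rule conjI)
     apply (subst e1) apply (subst cardk(1)) apply (subst cardk(2))
     using b1 apply (simp add: N_def mult.assoc)
    apply (subst e2) apply (subst cardk(1)) apply (subst cardk(2))
    using b2 apply (simp add: N_def mult.assoc)
    done
qed

lemma delta_sum2:
  fixes A B :: real
  assumes "finite S" "p \<in> S"
  shows "(\<Sum>x\<in>S. (if p = x then 1 else 0) * A * ((if q = x then 1 else 0) * B)) = (if p = q then 1 else 0) * A * B"
proof -
  have "(\<Sum>x\<in>S. (if p = x then 1 else 0) * A * ((if q = x then 1 else 0) * B)) =
        (\<Sum>x\<in>S. if x = p then (if p = q then 1 else 0) * A * B else 0)"
    by (rule sum.cong) auto
  also have "\<dots> = (if p = q then 1 else 0) * A * B" using assms by simp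
  finally show ?thesis .
qed

lemma env_alt:
  assumes tn: "tn_graph n E ends d" and j: "j < n"
  shows "env_site_frob2 n E ends d T j = (\<Sum>b\<in>out_idx E ends d. \<Sum>a\<in>fib E ends d b. \<Sum>a'\<in>fib E ends d b.
     (if loc E ends j a = loc E ends j a' then 1 else 0) * (\<Prod>i\<in>{..<n}-{j}. T i (loc E ends i a) * T i (loc E ends i a')))"
proof -
  let ?S = "site_idx E ends d j"
  let ?l = "loc E ends"
  let ?fib = "fib E ends d"
  let ?out = "out_idx E ends d"
  define R where "R a = (\<Prod>i\<in>{..<n}-{j}. T i (?l i a))" for a
  have c: "contract n E ends d (T(j := (\<lambda>a. if a = x then 1 else 0))) b = (\<Sum>a\<in>?fib b. (if ?l j a = x then 1 else 0) * R a)" for x b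
    unfolding contract_alt
  proof (rule sum.cong[OF refl])
    fix a
    have "(\<Prod>i<n. (T(j := (\<lambda>a. if a = x then 1 else 0))) i (?l i a)) =
      (T(j := (\<lambda>a. if a = x then 1 else 0))) j (?l j a) * (\<Prod>i\<in>{..<n}-{j}. (T(j := (\<lambda>a. if a = x then 1 else 0))) i (?l i a))"
      by (rule prod.remove) (use j in auto)
    also have "(\<Prod>i\<in>{..<n}-{j}. (T(j := (\<lambda>a. if a = x then 1 else 0))) i (?l i a)) = R a"
      unfolding R_def by (rule prod.cong) auto
    finally show "(\<Prod>i<n. (T(j := (\<lambda>a. if a = x then 1 else 0))) i (?l i a)) = (if ?l j a = x then 1 else 0) * R a"
      by simp
  qed
  have "env_site_frob2 n E ends d T j = (\<Sum>x\<in>?S. \<Sum>b\<in>?out. (\<Sum>a\<in>?fib b. (if ?l j a = x then 1 else 0) * R a)\<^sup>2)"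
    unfolding env_site_frob2_def c ..
  also have "\<dots> = (\<Sum>x\<in>?S. \<Sum>b\<in>?out. \<Sum>a\<in>?fib b. \<Sum>a'\<in>?fib b. (if ?l j a = x then 1 else 0) * R a * ((if ?l j a' = x then 1 else 0) * R a'))"
    by (simp add: power2_eq_square sum_product)
  also have "\<dots> = (\<Sum>b\<in>?out. \<Sum>a\<in>?fib b. \<Sum>a'\<in>?fib b. \<Sum>x\<in>?S. (if ?l j a = x then 1 else 0) * R a * ((if ?l j a' = x then 1 else 0) * R a'))"
    by (simp only: sum.swap[of _ _ ?S])
  also have "\<dots> = (\<Sum>b\<in>?out. \<Sum>a\<in>?fib b. \<Sum>a'\<in>?fib b. (if ?l j a = ?l j a' then 1 else 0) * R a * R a')"
    by (intro sum.cong refl delta_sum2 finite_site_idx[OF tn] loc_in) auto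
  also have "\<dots> = (\<Sum>b\<in>?out. \<Sum>a\<in>?fib b. \<Sum>a'\<in>?fib b. (if ?l j a = ?l j a' then 1 else 0) * (\<Prod>i\<in>{..<n}-{j}. T i (?l i a) * T i (?l i a')))"
    unfolding R_def by (simp add: prod.distrib mult.assoc)
  finally show ?thesis .
qed

lemma Fv_expand:
  assumes tn: "tn_graph n E ends d"
  shows "\<exists>B\<ge>0. \<forall>v m. (\<forall>j<n. \<bar>v j\<bar> \<le> m) \<longrightarrow> 0 \<le> m \<longrightarrow> m \<le> 1 \<longrightarrow>
     \<bar>Fv n E ends d T v - (\<Sum>j<n. v j * env_site_frob2 n E ends d T j)\<bar> \<le> B * m\<^sup>2"
proof -
  let ?l = "loc E ends"
  let ?fib = "fib E ends d"
  let ?out = "out_idx E ends d"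
  define c where "c a a' i = T i (?l i a) * T i (?l i a')" for a a' i
  define G where "G a a' = (2::real) ^ card {..<n} * (\<Prod>i<n. \<bar>c a a' i\<bar> + 1)" for a a'
  define B where "B = (\<Sum>b\<in>?out. \<Sum>a\<in>?fib b. \<Sum>a'\<in>?fib b. G a a')"
  have G0: "0 \<le> G a a'" for a a' unfolding G_def by (intro mult_nonneg_nonneg prod_nonneg) auto
  have B0: "0 \<le> B" unfolding B_def using G0 by (intro sum_nonneg) auto
  show ?thesis
  proof (intro exI[of _ B] conjI allI impI B0)
    fix v :: "nat \<Rightarrow> real" and m :: real
    assume v: "\<forall>j<n. \<bar>v j\<bar> \<le> m" and m0: "0 \<le> m" and m1: "m \<le> 1"
    define w where "w a a' i = (if ?l i a = ?l i a' then v i else 0)" for a a' i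
    define Lin where "Lin a a' = (\<Sum>i<n. w a a' i * (\<Prod>k\<in>{..<n}-{i}. c a a' k))" for a a'
    define Dd where "Dd a a' = (\<Prod>i<n. c a a' i + w a a' i) - (\<Prod>i<n. c a a' i) - Lin a a'" for a a'
    have Fv_eq: "Fv n E ends d T v = (\<Sum>b\<in>?out. \<Sum>a\<in>?fib b. \<Sum>a'\<in>?fib b. Lin a a') + (\<Sum>b\<in>?out. \<Sum>a\<in>?fib b. \<Sum>a'\<in>?fib b. Dd a a')"
      unfolding Fv_def Dd_def c_def w_def by (simp add: sum.distrib[symmetric])
    have lin: "(\<Sum>b\<in>?out. \<Sum>a\<in>?fib b. \<Sum>a'\<in>?fib b. Lin a a') = (\<Sum>j<n. v j * env_site_frob2 n E ends d T j)"
    proof -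
      have "(\<Sum>b\<in>?out. \<Sum>a\<in>?fib b. \<Sum>a'\<in>?fib b. Lin a a') =
         (\<Sum>b\<in>?out. \<Sum>a\<in>?fib b. \<Sum>a'\<in>?fib b. \<Sum>j<n. v j * ((if ?l j a = ?l j a' then 1 else 0) * (\<Prod>i\<in>{..<n}-{j}. T i (?l i a) * T i (?l i a'))))"
        unfolding Lin_def w_def c_def by (intro sum.cong refl) auto
      also have "\<dots> = (\<Sum>j<n. \<Sum>b\<in>?out. \<Sum>a\<in>?fib b. \<Sum>a'\<in>?fib b. v j * ((if ?l j a = ?l j a' then 1 else 0) * (\<Prod>i\<in>{..<n}-{j}. T i (?l i a) * T i (?l i a'))))"
        by (simp only: sum.swap[of _ _ "{..<n}"])
      also have "\<dots> = (\<Sum>j<n. v j * env_site_frob2 n E ends d T j)"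
        by (intro sum.cong refl) (simp add: env_alt[OF tn] sum_distrib_left)
      finally show ?thesis .
    qed
    have Db: "\<bar>Dd a a'\<bar> \<le> m\<^sup>2 * G a a'" for a a'
    proof -
      have "\<forall>j\<in>{..<n}. \<bar>w a a' j\<bar> \<le> m" using v m0 by (auto simp: w_def)
      from prod_expand_bound[OF finite_lessThan this m0 m1, of "c a a'"]
      show ?thesis unfolding Dd_def Lin_def G_def by (simp add: mult.assoc)
    qed
    have "\<bar>\<Sum>b\<in>?out. \<Sum>a\<in>?fib b. \<Sum>a'\<in>?fib b. Dd a a'\<bar> \<le> (\<Sum>b\<in>?out. \<Sum>a\<in>?fib b. \<Sum>a'\<in>?fib b. \<bar>Dd a a'\<bar>)"
    proof -
      have h1: "\<bar>\<Sum>a'\<in>?fib b. Dd a a'\<bar> \<le> (\<Sum>a'\<in>?fib b. \<bar>Dd a a'\<bar>)" for a b by (rule sum_abs)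
      have h2: "\<bar>\<Sum>a\<in>?fib b. \<Sum>a'\<in>?fib b. Dd a a'\<bar> \<le> (\<Sum>a\<in>?fib b. \<Sum>a'\<in>?fib b. \<bar>Dd a a'\<bar>)" for b
        by (rule order_trans[OF sum_abs sum_mono[OF h1]])
      show ?thesis by (rule order_trans[OF sum_abs sum_mono[OF h2]])
    qed
    also have "\<dots> \<le> (\<Sum>b\<in>?out. \<Sum>a\<in>?fib b. \<Sum>a'\<in>?fib b. m\<^sup>2 * G a a')"
      by (intro sum_mono Db)
    also have "\<dots> = B * m\<^sup>2" unfolding B_def by (simp add: sum_distrib_left mult.commute)
    finally show "\<bar>Fv n E ends d T v - (\<Sum>j<n. v j * env_site_frob2 n E ends d T j)\<bar> \<le> B * m\<^sup>2"
      unfolding Fv_eq lin by simp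
  qed
qed



lemma contract_scale: "contract n E ends d (\<lambda>j a. k j * T j a) b = (\<Prod>j<n. k j) * contract n E ends d T b"
  unfolding contract_alt by (simp add: prod.distrib sum_distrib_left)

lemma cn_sq: "(contract_norm n E ends d T)\<^sup>2 = (\<Sum>b\<in>out_idx E ends d. (contract n E ends d T b)\<^sup>2)"
  unfolding contract_norm_def frob_def by (simp add: sum_nonneg)

lemma cn_scale: "(contract_norm n E ends d (\<lambda>j a. k j * T j a))\<^sup>2 = (\<Prod>j<n. k j)\<^sup>2 * (contract_norm n E ends d T)\<^sup>2"
  unfolding cn_sq contract_scale by (simp add: power_mult_distrib sum_distrib_left)

lemma env_scale:
  assumes j: "j < n"
  shows "env_site_frob2 n E ends d (\<lambda>i a. k i * T i a) j = (\<Prod>i\<in>{..<n}-{j}. k i)\<^sup>2 * env_site_frob2 n E ends d T j"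
proof -
  have upd: "(\<lambda>i a. k i * T i a)(j := u) = (\<lambda>i a. (k(j := 1)) i * (T(j := u)) i a)" for u
    by (auto simp: fun_eq_iff)
  have pk: "(\<Prod>i<n. (k(j := 1)) i) = (\<Prod>i\<in>{..<n}-{j}. k i)"
  proof -
    have "(\<Prod>i<n. (k(j := 1)) i) = (k(j := 1)) j * (\<Prod>i\<in>{..<n}-{j}. (k(j := 1)) i)"
      by (rule prod.remove) (use j in auto)
    also have "(\<Prod>i\<in>{..<n}-{j}. (k(j := 1)) i) = (\<Prod>i\<in>{..<n}-{j}. k i)" by (rule prod.cong) auto
    finally show ?thesis by simp
  qed
  show ?thesis
    unfolding env_site_frob2_def upd contract_scale pk
    by (simp only: power_mult_distrib sum_distrib_left)
qed

lemma K_alt: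
  assumes tn: "tn_graph n E ends d" and sn: "\<forall>j<n. site_norm E ends d T j \<noteq> 0"
    and cn: "contract_norm n E ends d T \<noteq> 0"
  shows "env_frob2 n E ends d (normalize_tn E ends d T) / (contract_norm n E ends d (normalize_tn E ends d T))\<^sup>2
    = (\<Sum>j<n. env_site_frob2 n E ends d T j * ((site_norm E ends d T j)\<^sup>2 / real (card (site_idx E ends d j))))
        / (contract_norm n E ends d T)\<^sup>2"
proof -
  define k where "k j = sqrt (real (card (site_idx E ends d j))) / site_norm E ends d T j" for j
  have nt: "normalize_tn E ends d T = (\<lambda>j a. k j * T j a)"
    unfolding normalize_tn_def k_def by (auto simp: fun_eq_iff)
  have N0: "0 < real (card (site_idx E ends d j))" for j
    using finite_site_idx[OF tn] zero_in_site[OF tn] card_gt_0_iff by fastforce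
  have k0: "k j \<noteq> 0" if "j < n" for j using N0[of j] sn that by (simp add: k_def)
  have ksq: "(k j)\<^sup>2 = real (card (site_idx E ends d j)) / (site_norm E ends d T j)\<^sup>2" for j
    using N0[of j] by (simp add: k_def power_divide)
  have each: "env_site_frob2 n E ends d (\<lambda>i a. k i * T i a) j / (contract_norm n E ends d (\<lambda>j a. k j * T j a))\<^sup>2
     = env_site_frob2 n E ends d T j * ((site_norm E ends d T j)\<^sup>2 / real (card (site_idx E ends d j))) / (contract_norm n E ends d T)\<^sup>2"
    if j: "j < n" for j
  proof -
    have pr: "(\<Prod>i<n. k i) = k j * (\<Prod>i\<in>{..<n}-{j}. k i)"
      by (rule prod.remove) (use j in auto)
    have nz: "(\<Prod>i\<in>{..<n}-{j}. k i) \<noteq> 0" using k0 by auto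
    show ?thesis
      unfolding env_scale[OF j] cn_scale pr using nz k0[OF j] N0[of j] sn j cn
      by (simp add: ksq power_mult_distrib field_simps)
  qed
  show ?thesis
    unfolding nt env_frob2_def sum_divide_distrib using each by simp
qed



lemma err_bound:
  fixes M :: "'w measure" and \<delta> :: "nat \<Rightarrow> ('e \<Rightarrow> nat) \<Rightarrow> 'w \<Rightarrow> real"
  assumes tn: "tn_graph n E ends d" and sn: "sitewise_noise n E ends d M \<delta>"
    and cn: "contract_norm n E ends d T \<noteq> 0"
    and Bp: "\<forall>v m. (\<forall>j<n. \<bar>v j\<bar> \<le> m) \<longrightarrow> 0 \<le> m \<longrightarrow> m \<le> 1 \<longrightarrow>
     \<bar>Fv n E ends d T v - (\<Sum>j<n. v j * env_site_frob2 n E ends d T j)\<bar> \<le> B * m\<^sup>2"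
    and vm: "\<forall>j<n. \<bar>integral\<^sup>L M (\<lambda>\<omega>. (\<delta> j (\<lambda>_. 0) \<omega>)\<^sup>2)\<bar> \<le> m" and m: "0 \<le> m" "m \<le> 1"
  shows "\<bar>exp_rel_err2 n E ends d T M \<delta> - (\<Sum>j<n. integral\<^sup>L M (\<lambda>\<omega>. (\<delta> j (\<lambda>_. 0) \<omega>)\<^sup>2) * env_site_frob2 n E ends d T j)
     / (contract_norm n E ends d T)\<^sup>2\<bar> \<le> B * m\<^sup>2 / (contract_norm n E ends d T)\<^sup>2"
proof -
  define v where "v = (\<lambda>j. integral\<^sup>L M (\<lambda>\<omega>. (\<delta> j (\<lambda>_. 0) \<omega>)\<^sup>2))"
  have e: "exp_rel_err2 n E ends d T M \<delta> = Fv n E ends d T v / (contract_norm n E ends d T)\<^sup>2"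
    unfolding v_def by (rule exp_formula(1)[OF tn sn])
  have b: "\<bar>Fv n E ends d T v - (\<Sum>j<n. v j * env_site_frob2 n E ends d T j)\<bar> \<le> B * m\<^sup>2"
  proof -
    have "\<And>j. j<n \<Longrightarrow> \<bar>v j\<bar> \<le> m" using vm by (simp add: v_def)
    from Bp[rule_format, OF this m] show ?thesis .
  qed
  have pos: "0 < (contract_norm n E ends d T)\<^sup>2" using cn by simp
  have b': "\<bar>Fv n E ends d T v - (\<Sum>j<n. integral\<^sup>L M (\<lambda>\<omega>. (\<delta> j (\<lambda>_. 0) \<omega>)\<^sup>2) * env_site_frob2 n E ends d T j)\<bar> \<le> B * m\<^sup>2"
    using b by (simp add: v_def)
  show ?thesis unfolding e
    using b' pos by (simp add: diff_divide_distrib[symmetric] divide_right_mono)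
qed

lemma v_facts:
  fixes M :: "'w measure" and \<delta> :: "nat \<Rightarrow> ('e \<Rightarrow> nat) \<Rightarrow> 'w \<Rightarrow> real"
  assumes tn: "tn_graph n E ends d" and sn: "sitewise_noise n E ends d M \<delta>" and j: "j < n"
  shows "0 \<le> integral\<^sup>L M (\<lambda>\<omega>. (\<delta> j (\<lambda>_. 0) \<omega>)\<^sup>2)"
    and "exp_site_sq E ends d M \<delta> j = real (card (site_idx E ends d j)) * integral\<^sup>L M (\<lambda>\<omega>. (\<delta> j (\<lambda>_. 0) \<omega>)\<^sup>2)"
    and "integral\<^sup>L M (\<lambda>\<omega>. (\<delta> j (\<lambda>_. 0) \<omega> - integral\<^sup>L M (\<delta> j (\<lambda>_. 0)))\<^sup>2) = integral\<^sup>L M (\<lambda>\<omega>. (\<delta> j (\<lambda>_. 0) \<omega>)\<^sup>2)"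
proof -
  show "0 \<le> integral\<^sup>L M (\<lambda>\<omega>. (\<delta> j (\<lambda>_. 0) \<omega>)\<^sup>2)" by simp
  show "exp_site_sq E ends d M \<delta> j = real (card (site_idx E ends d j)) * integral\<^sup>L M (\<lambda>\<omega>. (\<delta> j (\<lambda>_. 0) \<omega>)\<^sup>2)"
    using exp_formula(2)[OF tn sn] j by blast
  have "integral\<^sup>L M (\<delta> j (\<lambda>_. 0)) = 0" using sn zero_in_site[OF tn] j unfolding sitewise_noise_def by blast
  then show "integral\<^sup>L M (\<lambda>\<omega>. (\<delta> j (\<lambda>_. 0) \<omega> - integral\<^sup>L M (\<delta> j (\<lambda>_. 0)))\<^sup>2) = integral\<^sup>L M (\<lambda>\<omega>. (\<delta> j (\<lambda>_. 0) \<omega>)\<^sup>2)"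
    by simp
qed



theorem mainTheorem6:
  fixes n :: nat and E :: "'e set" and ends :: "'e \<Rightarrow> nat set" and d :: "'e \<Rightarrow> nat"
    and T :: "nat \<Rightarrow> ('e \<Rightarrow> nat) \<Rightarrow> real"
  assumes "tn_graph n E ends d"
    and "\<forall>j<n. site_norm E ends d T j \<noteq> 0"
    and "contract_norm n E ends d T \<noteq> 0"
  defines "K \<equiv> env_frob2 n E ends d (normalize_tn E ends d T)
                / (contract_norm n E ends d (normalize_tn E ends d T))\<^sup>2"
    and "K' \<equiv> env_frob2 n E ends d T / (contract_norm n E ends d T)\<^sup>2"
  shows
    "(\<forall>(M :: real \<Rightarrow> 'w measure) \<delta>.
        (\<forall>\<epsilon>>0. sitewise_noise n E ends d (M \<epsilon>) (\<delta> \<epsilon>) \<and>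
           (\<forall>j<n. exp_site_sq E ends d (M \<epsilon>) (\<delta> \<epsilon>) j \<le> \<epsilon>\<^sup>2 * (site_norm E ends d T j)\<^sup>2))
        \<longrightarrow> (\<exists>C. eventually (\<lambda>\<epsilon>. exp_rel_err2 n E ends d T (M \<epsilon>) (\<delta> \<epsilon>) \<le> \<epsilon>\<^sup>2 * K + C * \<epsilon> ^ 3)
                     (at_right 0)))
     \<and> (\<forall>(M :: real \<Rightarrow> 'w measure) \<delta>.
        (\<forall>\<epsilon>>0. sitewise_noise n E ends d (M \<epsilon>) (\<delta> \<epsilon>) \<and>
           (\<forall>j<n. exp_site_sq E ends d (M \<epsilon>) (\<delta> \<epsilon>) j = \<epsilon>\<^sup>2 * (site_norm E ends d T j)\<^sup>2))
        \<longrightarrow> (\<lambda>\<epsilon>. exp_rel_err2 n E ends d T (M \<epsilon>) (\<delta> \<epsilon>) - \<epsilon>\<^sup>2 * K) \<in> O[at_right 0](\<lambda>\<epsilon>. \<epsilon> ^ 3))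
     \<and> (\<forall>(M :: real \<Rightarrow> 'v measure) \<delta>.
        (\<forall>\<sigma>>0. sitewise_noise n E ends d (M \<sigma>) (\<delta> \<sigma>) \<and>
           (\<forall>j<n. \<forall>a\<in>site_idx E ends d j.
              integral\<^sup>L (M \<sigma>) (\<lambda>\<omega>. (\<delta> \<sigma> j a \<omega> - integral\<^sup>L (M \<sigma>) (\<delta> \<sigma> j a))\<^sup>2) = \<sigma>\<^sup>2))
        \<longrightarrow> (\<lambda>\<sigma>. exp_rel_err2 n E ends d T (M \<sigma>) (\<delta> \<sigma>) - \<sigma>\<^sup>2 * K') \<in> O[at_right 0](\<lambda>\<sigma>. \<sigma> ^ 3))"
proof -
  note tn = assms(1) and snz = assms(2) and cnz = assms(3)
  let ?cn = "contract_norm n E ends d T"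
  let ?L = "env_site_frob2 n E ends d T"
  define N where "N j = real (card (site_idx E ends d j))" for j
  define s where "s j = site_norm E ends d T j" for j
  define r where "r j = (s j)\<^sup>2 / N j" for j
  define A where "A = (\<Sum>j<n. r j)"
  obtain B where B0: "0 \<le> B" and Bp: "\<forall>v m. (\<forall>j<n. \<bar>v j\<bar> \<le> m) \<longrightarrow> 0 \<le> m \<longrightarrow> m \<le> 1 \<longrightarrow>
     \<bar>Fv n E ends d T v - (\<Sum>j<n. v j * ?L j)\<bar> \<le> B * m\<^sup>2"
    using Fv_expand[OF tn, of T] by blast
  have pos: "0 < ?cn\<^sup>2" using cnz by simp
  have N0: "0 < N j" for j
    using finite_site_idx[OF tn] zero_in_site[OF tn] card_gt_0_iff unfolding N_def by fastforce
  have r0: "0 \<le> r j" for j using N0[of j] by (simp add: r_def)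
  have A0: "0 \<le> A" unfolding A_def using r0 by (simp add: sum_nonneg)
  have rA: "r j \<le> A" if "j < n" for j unfolding A_def
    by (rule member_le_sum) (use that r0 in auto)
  have L0: "0 \<le> ?L j" for j unfolding env_site_frob2_def by (intro sum_nonneg) auto
  have Keq: "K = (\<Sum>j<n. ?L j * r j) / ?cn\<^sup>2"
    unfolding K_def K_alt[OF tn snz cnz] r_def s_def N_def ..
  define C where "C = B * A\<^sup>2 / ?cn\<^sup>2"
  have C0: "0 \<le> C" unfolding C_def using B0 by simp
  have ev: "eventually (\<lambda>\<epsilon>. \<epsilon> \<in> {0<..<1 / (A + 1)}) (at_right (0::real))"
    by (rule eventually_at_right_real) (use A0 in simp)
  have small: "\<epsilon>\<^sup>2 * A \<le> 1" "\<epsilon> < 1" if "\<epsilon> \<in> {0<..<1 / (A + 1)}" for \<epsilon> :: real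
  proof -
    have e0: "0 < \<epsilon>" and e1: "\<epsilon> * (A + 1) < 1" using that A0 by (auto simp: field_simps)
    then show "\<epsilon> < 1" using A0 by (smt (verit) mult_le_cancel_left1)
    then have "\<epsilon>\<^sup>2 \<le> \<epsilon>" using e0 by (simp add: power2_eq_square)
    then have "\<epsilon>\<^sup>2 * A \<le> \<epsilon> * A" using A0 by (rule mult_right_mono)
    also have "\<dots> \<le> 1" using e1 e0 by (simp add: algebra_simps)
    finally show "\<epsilon>\<^sup>2 * A \<le> 1" .
  qed
  have e43: "\<epsilon> ^ 4 \<le> \<epsilon> ^ 3" if "0 < \<epsilon>" "\<epsilon> < 1" for \<epsilon> :: real
    using that by (simp add: power_decreasing)
  show ?thesis
  proof (intro conjI allI impI)
    fix M :: "real \<Rightarrow> 'w measure" and \<delta>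
    assume H: "\<forall>\<epsilon>>0. sitewise_noise n E ends d (M \<epsilon>) (\<delta> \<epsilon>) \<and>
           (\<forall>j<n. exp_site_sq E ends d (M \<epsilon>) (\<delta> \<epsilon>) j \<le> \<epsilon>\<^sup>2 * (site_norm E ends d T j)\<^sup>2)"
    show "\<exists>C. eventually (\<lambda>\<epsilon>. exp_rel_err2 n E ends d T (M \<epsilon>) (\<delta> \<epsilon>) \<le> \<epsilon>\<^sup>2 * K + C * \<epsilon> ^ 3) (at_right 0)"
    proof (intro exI[of _ C] eventually_mono[OF ev])
      fix \<epsilon> :: real assume e: "\<epsilon> \<in> {0<..<1 / (A + 1)}"
      then have e0: "0 < \<epsilon>" by simp
      have sn: "sitewise_noise n E ends d (M \<epsilon>) (\<delta> \<epsilon>)" using H e0 by blast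
      define v where "v j = integral\<^sup>L (M \<epsilon>) (\<lambda>\<omega>. (\<delta> \<epsilon> j (\<lambda>_. 0) \<omega>)\<^sup>2)" for j
      have vle: "0 \<le> v j \<and> v j \<le> \<epsilon>\<^sup>2 * r j" if "j < n" for j
      proof -
        have "N j * v j \<le> \<epsilon>\<^sup>2 * (s j)\<^sup>2"
          using v_facts(2)[OF tn sn that] H e0 that unfolding v_def N_def s_def by force
        then show ?thesis using v_facts(1)[OF tn sn that] N0[of j]
          by (simp add: v_def r_def field_simps)
      qed
      have vm: "\<forall>j<n. \<bar>v j\<bar> \<le> \<epsilon>\<^sup>2 * A"
      proof (intro allI impI)
        fix j assume j: "j < n"
        have "\<epsilon>\<^sup>2 * r j \<le> \<epsilon>\<^sup>2 * A" using rA[OF j] by (simp add: mult_left_mono)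
        then show "\<bar>v j\<bar> \<le> \<epsilon>\<^sup>2 * A" using vle[OF j] by simp
      qed
      have m0: "0 \<le> \<epsilon>\<^sup>2 * A" using A0 by simp
      note eb = err_bound[OF tn sn cnz Bp vm[unfolded v_def] m0 small(1)[OF e]]
      have sv: "(\<Sum>j<n. v j * ?L j) \<le> \<epsilon>\<^sup>2 * (\<Sum>j<n. ?L j * r j)"
        unfolding sum_distrib_left
      proof (rule sum_mono)
        fix j assume "j \<in> {..<n}"
        then have "v j * ?L j \<le> (\<epsilon>\<^sup>2 * r j) * ?L j" using vle L0 by (intro mult_right_mono) auto
        then show "v j * ?L j \<le> \<epsilon>\<^sup>2 * (?L j * r j)" by (simp add: algebra_simps)
      qed
      have "(\<Sum>j<n. v j * ?L j) / ?cn\<^sup>2 \<le> \<epsilon>\<^sup>2 * K"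
        unfolding Keq using divide_right_mono[OF sv, of "?cn\<^sup>2"] pos by simp
      moreover have "B * (\<epsilon>\<^sup>2 * A)\<^sup>2 / ?cn\<^sup>2 = C * \<epsilon> ^ 4"
        unfolding C_def by (simp add: power_mult_distrib power2_eq_square power4_eq_xxxx)
      moreover have "C * \<epsilon> ^ 4 \<le> C * \<epsilon> ^ 3" using e43[OF e0 small(2)[OF e]] C0 by (rule mult_left_mono)
      ultimately show "exp_rel_err2 n E ends d T (M \<epsilon>) (\<delta> \<epsilon>) \<le> \<epsilon>\<^sup>2 * K + C * \<epsilon> ^ 3"
        using eb unfolding v_def by linarith
    qed
  next
    fix M :: "real \<Rightarrow> 'w measure" and \<delta>
    assume H: "\<forall>\<epsilon>>0. sitewise_noise n E ends d (M \<epsilon>) (\<delta> \<epsilon>) \<and>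
           (\<forall>j<n. exp_site_sq E ends d (M \<epsilon>) (\<delta> \<epsilon>) j = \<epsilon>\<^sup>2 * (site_norm E ends d T j)\<^sup>2)"
    show "(\<lambda>\<epsilon>. exp_rel_err2 n E ends d T (M \<epsilon>) (\<delta> \<epsilon>) - \<epsilon>\<^sup>2 * K) \<in> O[at_right 0](\<lambda>\<epsilon>. \<epsilon> ^ 3)"
    proof (rule bigoI[where c=C], rule eventually_mono[OF ev])
      fix \<epsilon> :: real assume e: "\<epsilon> \<in> {0<..<1 / (A + 1)}"
      then have e0: "0 < \<epsilon>" by simp
      have sn: "sitewise_noise n E ends d (M \<epsilon>) (\<delta> \<epsilon>)" using H e0 by blast
      define v where "v j = integral\<^sup>L (M \<epsilon>) (\<lambda>\<omega>. (\<delta> \<epsilon> j (\<lambda>_. 0) \<omega>)\<^sup>2)" for j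
      have veq: "v j = \<epsilon>\<^sup>2 * r j" if "j < n" for j
      proof -
        have "N j * v j = \<epsilon>\<^sup>2 * (s j)\<^sup>2"
          using v_facts(2)[OF tn sn that] H e0 that unfolding v_def N_def s_def by force
        then show ?thesis using N0[of j] by (simp add: r_def field_simps)
      qed
      have vm: "\<forall>j<n. \<bar>v j\<bar> \<le> \<epsilon>\<^sup>2 * A"
      proof (intro allI impI)
        fix j assume j: "j < n"
        have "\<epsilon>\<^sup>2 * r j \<le> \<epsilon>\<^sup>2 * A" using rA[OF j] by (simp add: mult_left_mono)
        then show "\<bar>v j\<bar> \<le> \<epsilon>\<^sup>2 * A" using veq[OF j] r0[of j] by simp
      qed
      have m0: "0 \<le> \<epsilon>\<^sup>2 * A" using A0 by simp
      note eb = err_bound[OF tn sn cnz Bp vm[unfolded v_def] m0 small(1)[OF e]]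
      have sv: "(\<Sum>j<n. v j * ?L j) = \<epsilon>\<^sup>2 * (\<Sum>j<n. ?L j * r j)"
        unfolding sum_distrib_left by (rule sum.cong) (auto simp: veq)
      have "(\<Sum>j<n. v j * ?L j) / ?cn\<^sup>2 = \<epsilon>\<^sup>2 * K"
        unfolding Keq sv by simp
      moreover have "B * (\<epsilon>\<^sup>2 * A)\<^sup>2 / ?cn\<^sup>2 = C * \<epsilon> ^ 4"
        unfolding C_def by (simp add: power_mult_distrib power2_eq_square power4_eq_xxxx)
      moreover have "C * \<epsilon> ^ 4 \<le> C * \<epsilon> ^ 3" using e43[OF e0 small(2)[OF e]] C0 by (rule mult_left_mono)
      ultimately have "\<bar>exp_rel_err2 n E ends d T (M \<epsilon>) (\<delta> \<epsilon>) - \<epsilon>\<^sup>2 * K\<bar> \<le> C * \<epsilon> ^ 3"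
        using eb unfolding v_def by linarith
      then show "norm (exp_rel_err2 n E ends d T (M \<epsilon>) (\<delta> \<epsilon>) - \<epsilon>\<^sup>2 * K) \<le> C * norm (\<epsilon> ^ 3)"
        using e0 by simp
    qed
  next
    fix M :: "real \<Rightarrow> 'v measure" and \<delta>
    assume H: "\<forall>\<sigma>>0. sitewise_noise n E ends d (M \<sigma>) (\<delta> \<sigma>) \<and>
           (\<forall>j<n. \<forall>a\<in>site_idx E ends d j.
              integral\<^sup>L (M \<sigma>) (\<lambda>\<omega>. (\<delta> \<sigma> j a \<omega> - integral\<^sup>L (M \<sigma>) (\<delta> \<sigma> j a))\<^sup>2) = \<sigma>\<^sup>2)"
    show "(\<lambda>\<sigma>. exp_rel_err2 n E ends d T (M \<sigma>) (\<delta> \<sigma>) - \<sigma>\<^sup>2 * K') \<in> O[at_right 0](\<lambda>\<sigma>. \<sigma> ^ 3)"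
    proof (rule bigoI[where c="B / ?cn\<^sup>2"], rule eventually_mono[OF ev])
      fix \<epsilon> :: real assume e: "\<epsilon> \<in> {0<..<1 / (A + 1)}"
      then have e0: "0 < \<epsilon>" by simp
      have e1: "\<epsilon> < 1" using small(2)[OF e] .
      have sn: "sitewise_noise n E ends d (M \<epsilon>) (\<delta> \<epsilon>)" using H e0 by blast
      define v where "v j = integral\<^sup>L (M \<epsilon>) (\<lambda>\<omega>. (\<delta> \<epsilon> j (\<lambda>_. 0) \<omega>)\<^sup>2)" for j
      have veq: "v j = \<epsilon>\<^sup>2" if "j < n" for j
        using v_facts(3)[OF tn sn that] H e0 that zero_in_site[OF tn, of j] unfolding v_def by force
      have vm: "\<forall>j<n. \<bar>v j\<bar> \<le> \<epsilon>\<^sup>2" using veq by simp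
      have m0: "0 \<le> \<epsilon>\<^sup>2" by simp
      have m1: "\<epsilon>\<^sup>2 \<le> 1" using e0 e1 by (simp add: power_le_one)
      note eb = err_bound[OF tn sn cnz Bp vm[unfolded v_def] m0 m1]
      have sv: "(\<Sum>j<n. v j * ?L j) = \<epsilon>\<^sup>2 * env_frob2 n E ends d T"
        unfolding sum_distrib_left env_frob2_def by (rule sum.cong) (auto simp: veq)
      have "(\<Sum>j<n. v j * ?L j) / ?cn\<^sup>2 = \<epsilon>\<^sup>2 * K'"
        unfolding K'_def sv by simp
      moreover have "B * (\<epsilon>\<^sup>2)\<^sup>2 / ?cn\<^sup>2 = B / ?cn\<^sup>2 * \<epsilon> ^ 4"
        by (simp add: power_mult_distrib power2_eq_square power4_eq_xxxx)
      moreover have "B / ?cn\<^sup>2 * \<epsilon> ^ 4 \<le> B / ?cn\<^sup>2 * \<epsilon> ^ 3"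
        using e43[OF e0 e1] B0 by (intro mult_left_mono) auto
      ultimately have "\<bar>exp_rel_err2 n E ends d T (M \<epsilon>) (\<delta> \<epsilon>) - \<epsilon>\<^sup>2 * K'\<bar> \<le> B / ?cn\<^sup>2 * \<epsilon> ^ 3"
        using eb unfolding v_def by linarith
      then show "norm (exp_rel_err2 n E ends d T (M \<epsilon>) (\<delta> \<epsilon>) - \<epsilon>\<^sup>2 * K') \<le> B / ?cn\<^sup>2 * norm (\<epsilon> ^ 3)"
        using e0 by simp
    qed
  qed
qed

end
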